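(* Let $(Y_n)$ satisfy Condition 1 with constant $\alpha$, and fix an integer $a\ge1$. For $i\ge1$ let $\pi_i(n)$ be the probability that, in the leader election process started with $n$ players (stopped as soon as at most $a$ players remain), there is some round after which exactly $i$ players remain (i.e. $N_k=i$ for some $k$ up to the stopping time). Then for every $i\ge1$ there is a continuous, locally Lipschitz function $\psi_i$ on $(0,\infty)$ with $\psi_i(\alpha t)=\psi_i(t)$ such that $\pi_i(n)=\psi_i(n)+o(1)$ as $n\to\infty$.
   Context: Condition 1: $(Y_n)_{n\ge1}$ is a sequence of random variables with $1\le Y_n\le n$ for all $n$ and $\Pr(Y_n=n)<1$ for $n\ge2$, such that: (i) $\Pr(Y_n\le k)\ge\Pr(Y_{n+1}\le k)$ for all $n,k\ge1$; (ii) there are constants $\alpha\in(0,1)$, $\varepsilon>0$ and $\delta_n=O((\log n)^{-1-\varepsilon})$ with $\mathbb E Y_{n+1}-\mathbb E Y_n=\alpha+O(\delta_n)$; (iii) $\Pr(|Y_n-\alpha n|>\delta_n n)=O(n^{-2-\varepsilon})$. Leader election process: $N_0=n$ and $(N_k)$ is the Markov chain on $\{1,2,\dots\}$ with $\Pr(N_{k+1}=j\mid N_k=i)=\Pr(Y_i=j)$. *)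

theory Defs
  imports "HOL-Analysis.Analysis" "HOL-Probability.Probability" "HOL-Library.Landau_Symbols"
begin

definition condition1 :: "(nat \<Rightarrow> nat pmf) \<Rightarrow> real \<Rightarrow> bool" where
  "condition1 Y \<alpha> \<longleftrightarrow>
     (\<forall>n\<ge>1. set_pmf (Y n) \<subseteq> {1..n}) \<and>
     (\<forall>n\<ge>2. pmf (Y n) n < 1) \<and>
     (\<forall>n\<ge>1. \<forall>k\<ge>1. measure_pmf.prob (Y (Suc n)) {..k} \<le> measure_pmf.prob (Y n) {..k}) \<and>
     0 < \<alpha> \<and> \<alpha> < 1 \<and>
     (\<exists>\<epsilon>>0. \<exists>\<delta> :: nat \<Rightarrow> real.
        \<delta> \<in> O(\<lambda>n. (ln (real n)) powr (-1 - \<epsilon>)) \<and>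
        (\<lambda>n. measure_pmf.expectation (Y (Suc n)) real - measure_pmf.expectation (Y n) real - \<alpha>)
           \<in> O(\<delta>) \<and>
        (\<lambda>n. measure_pmf.prob (Y n) {k. \<bar>real k - \<alpha> * real n\<bar> > \<delta> n * real n})
           \<in> O(\<lambda>n. real n powr (-2 - \<epsilon>)))"

text \<open>Law of the first K+1 states (N_0,...,N_K) of the leader election chain started at n.\<close>
fun le_path :: "(nat \<Rightarrow> nat pmf) \<Rightarrow> nat \<Rightarrow> nat \<Rightarrow> nat list pmf" where
  "le_path Y n 0 = return_pmf [n]"
| "le_path Y n (Suc K) = bind_pmf (le_path Y n K) (\<lambda>xs. map_pmf (\<lambda>j. xs @ [j]) (Y (last xs)))"

text \<open>Event: some N_k = i with k up to the stopping time (all earlier states exceed a).\<close>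
definition hits_before_stop :: "nat \<Rightarrow> nat \<Rightarrow> nat list \<Rightarrow> bool" where
  "hits_before_stop a i xs \<longleftrightarrow> (\<exists>k<length xs. xs ! k = i \<and> (\<forall>l<k. xs ! l > a))"

text \<open>pi_i(n): probability of the (increasing) union over horizons K of these events.\<close>
definition visit_prob :: "(nat \<Rightarrow> nat pmf) \<Rightarrow> nat \<Rightarrow> nat \<Rightarrow> nat \<Rightarrow> real" where
  "visit_prob Y a i n = (SUP K. measure_pmf.prob (le_path Y n K) {xs. hits_before_stop a i xs})"

definition locally_lipschitz_on :: "real set \<Rightarrow> (real \<Rightarrow> real) \<Rightarrow> bool" where
  "locally_lipschitz_on S f \<longleftrightarrow> (\<forall>x\<in>S. \<exists>e>0. \<exists>L. L-lipschitz_on (cball x e \<inter> S) f)"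

end

theory Submission
  imports Defs "HOL-Real_Asymp.Real_Asymp"
begin


lemma prob_bind_finite:
  assumes "finite (set_pmf M)"
  shows "measure_pmf.prob (bind_pmf M N) X = (\<Sum>x\<in>set_pmf M. pmf M x * measure_pmf.prob (N x) X)"
proof -
  have "emeasure (measure_pmf (bind_pmf M N)) X = (\<integral>\<^sup>+x. emeasure (N x) X \<partial>M)" by simp
  also have "\<dots> = (\<Sum>x\<in>set_pmf M. emeasure (N x) X * pmf M x)"
    using assms by (intro nn_integral_measure_pmf_finite) auto
  also have "\<dots> = (\<Sum>x\<in>set_pmf M. ennreal (pmf M x * measure_pmf.prob (N x) X))"
    by (intro sum.cong refl) (subst ennreal_mult, auto simp: measure_pmf.emeasure_eq_measure mult.commute)
  also have "\<dots> = ennreal (\<Sum>x\<in>set_pmf M. pmf M x * measure_pmf.prob (N x) X)"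
    by (rule sum_ennreal) simp
  finally show ?thesis
    by (simp add: measure_pmf.emeasure_eq_measure sum_nonneg)
qed

lemma le_path_set:
  "xs \<in> set_pmf (le_path Y n K) \<Longrightarrow> length xs = Suc K \<and> hd xs = n"
proof (induction K arbitrary: xs)
  case 0 then show ?case by simp
next
  case (Suc K)
  then obtain ys j where "ys \<in> set_pmf (le_path Y n K)" "xs = ys @ [j]" by auto
  with Suc.IH[of ys] show ?case by (cases ys) auto
qed

lemma le_path_Suc':
  "le_path Y n (Suc K) = bind_pmf (Y n) (\<lambda>j. map_pmf ((#) n) (le_path Y j K))"
proof (induction K arbitrary: n)
  case 0
  show ?case by (simp add: bind_return_pmf map_pmf_def)
next
  case (Suc K)
  have "le_path Y n (Suc (Suc K)) = bind_pmf (le_path Y n (Suc K))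
          (\<lambda>xs. map_pmf (\<lambda>j. xs @ [j]) (Y (last xs)))" by simp
  also have "\<dots> = bind_pmf (Y n) (\<lambda>j. bind_pmf (map_pmf ((#) n) (le_path Y j K))
          (\<lambda>xs. map_pmf (\<lambda>j. xs @ [j]) (Y (last xs))))"
    by (simp only: Suc.IH bind_assoc_pmf)
  also have "\<dots> = bind_pmf (Y n) (\<lambda>j. map_pmf ((#) n) (le_path Y j (Suc K)))"
  proof (intro bind_pmf_cong refl)
    fix j
    have "bind_pmf (map_pmf ((#) n) (le_path Y j K)) (\<lambda>xs. map_pmf (\<lambda>j. xs @ [j]) (Y (last xs)))
        = bind_pmf (le_path Y j K) (\<lambda>ys. map_pmf (\<lambda>j'. (n # ys) @ [j']) (Y (last (n # ys))))"
      by (simp add: bind_map_pmf)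
    also have "\<dots> = bind_pmf (le_path Y j K) (\<lambda>ys. map_pmf ((#) n) (map_pmf (\<lambda>j'. ys @ [j']) (Y (last ys))))"
    proof (intro bind_pmf_cong refl)
      fix ys assume "ys \<in> set_pmf (le_path Y j K)"
      then have "ys \<noteq> []" using le_path_set[of ys Y j K] by auto
      then show "map_pmf (\<lambda>j'. (n # ys) @ [j']) (Y (last (n # ys))) =
                 map_pmf ((#) n) (map_pmf (\<lambda>j'. ys @ [j']) (Y (last ys)))"
        by (simp add: pmf.map_comp o_def)
    qed
    also have "\<dots> = map_pmf ((#) n) (le_path Y j (Suc K))"
      by (simp add: map_bind_pmf)
    finally show "bind_pmf (map_pmf ((#) n) (le_path Y j K)) (\<lambda>xs. map_pmf (\<lambda>j. xs @ [j]) (Y (last xs)))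
        = map_pmf ((#) n) (le_path Y j (Suc K))" .
  qed
  finally show ?case .
qed

lemma hits_Cons:
  assumes "n \<noteq> i" "n > a"
  shows "hits_before_stop a i (n # ys) \<longleftrightarrow> hits_before_stop a i ys"
proof
  assume "hits_before_stop a i (n # ys)"
  then obtain k where k: "k < length (n # ys)" "(n # ys) ! k = i" "\<forall>l<k. (n # ys) ! l > a"
    unfolding hits_before_stop_def by blast
  then obtain k' where "k = Suc k'" using assms by (cases k) auto
  with k show "hits_before_stop a i ys" unfolding hits_before_stop_def
    by (intro exI[of _ k']) (auto dest: spec[of _ "Suc _"])
next
  assume "hits_before_stop a i ys"
  then obtain k where k: "k < length ys" "ys ! k = i" "\<forall>l<k. ys ! l > a"
    unfolding hits_before_stop_def by blast
  show "hits_before_stop a i (n # ys)" unfolding hits_before_stop_def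
  proof (intro exI[of _ "Suc k"] conjI allI impI)
    fix l assume "l < Suc k" then show "(n # ys) ! l > a" using k assms by (cases l) auto
  qed (use k in auto)
qed

definition pK :: "(nat \<Rightarrow> nat pmf) \<Rightarrow> nat \<Rightarrow> nat \<Rightarrow> nat \<Rightarrow> nat \<Rightarrow> real" where
  "pK Y a i K n = measure_pmf.prob (le_path Y n K) {xs. hits_before_stop a i xs}"

lemma pK_i: "pK Y a i K i = 1"
  unfolding pK_def
proof (subst measure_pmf.prob_eq_1)
  show "AE x in measure_pmf (le_path Y i K). x \<in> {xs. hits_before_stop a i xs}"
  proof (rule AE_pmfI)
    fix xs assume "xs \<in> set_pmf (le_path Y i K)"
    then have "length xs = Suc K" "hd xs = i" using le_path_set by blast+
    then show "xs \<in> {xs. hits_before_stop a i xs}"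
      unfolding hits_before_stop_def by (intro CollectI exI[of _ 0]) (cases xs; auto)
  qed
qed auto

lemma pK_low: assumes "n \<le> a" "n \<noteq> i" shows "pK Y a i K n = 0"
  unfolding pK_def measure_pmf_zero_iff
proof (auto)
  fix xs assume "xs \<in> set_pmf (le_path Y n K)" "hits_before_stop a i xs"
  then have "length xs = Suc K" "hd xs = n" using le_path_set by blast+
  moreover from \<open>hits_before_stop a i xs\<close> obtain k where k: "k < length xs" "xs ! k = i" "\<forall>l<k. xs ! l > a"
    unfolding hits_before_stop_def by blast
  ultimately show False using assms
    by (cases xs; cases k) (auto dest: spec[of _ 0])
qed

lemma pK_rec:
  assumes "n \<noteq> i" "n > a" "finite (set_pmf (Y n))"
  shows "pK Y a i (Suc K) n = (\<Sum>j\<in>set_pmf (Y n). pmf (Y n) j * pK Y a i K j)"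
proof -
  have "(#) n -` {xs. hits_before_stop a i xs} = {xs. hits_before_stop a i xs}"
    using hits_Cons[OF assms(1,2)] by auto
  then show ?thesis
    unfolding pK_def le_path_Suc' by (simp add: prob_bind_finite[OF assms(3)])
qed

lemma pK_mono:
  assumes fin: "\<And>n. n > a \<Longrightarrow> finite (set_pmf (Y n))"
  shows "pK Y a i K n \<le> pK Y a i (Suc K) n"
proof (induction K arbitrary: n)
  case 0
  show ?case
  proof (cases "n = i")
    case True then show ?thesis by (simp add: pK_i)
  next
    case False
    have "pK Y a i 0 n = 0" unfolding pK_def measure_pmf_zero_iff
      using False by (auto simp: hits_before_stop_def)
    then show ?thesis unfolding pK_def by simp
  qed
next
  case (Suc K)
  show ?case
  proof (cases "n = i")
    case True then show ?thesis by (simp add: pK_i)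
  next
    case False
    show ?thesis
    proof (cases "n \<le> a")
      case True then show ?thesis using False by (simp add: pK_low)
    next
      case nl: False
      then have "n > a" by simp
      have fn: "finite (set_pmf (Y n))" using fin \<open>n > a\<close> by blast
      have r1: "pK Y a i (Suc K) n = (\<Sum>j\<in>set_pmf (Y n). pmf (Y n) j * pK Y a i K j)"
        using pK_rec False \<open>n > a\<close> fn by blast
      have r2: "pK Y a i (Suc (Suc K)) n = (\<Sum>j\<in>set_pmf (Y n). pmf (Y n) j * pK Y a i (Suc K) j)"
        using pK_rec False \<open>n > a\<close> fn by blast
      show ?thesis
        unfolding r1 r2
        by (intro sum_mono mult_left_mono Suc.IH) auto
    qed
  qed
qed

lemma pK_bounds: "0 \<le> pK Y a i K n" "pK Y a i K n \<le> 1"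
  unfolding pK_def by auto

lemma visit_prob_lim:
  assumes fin: "\<And>n. n > a \<Longrightarrow> finite (set_pmf (Y n))"
  shows "(\<lambda>K. pK Y a i K n) \<longlonglongrightarrow> visit_prob Y a i n"
proof -
  have "(\<lambda>K. pK Y a i K n) \<longlonglongrightarrow> (SUP K. pK Y a i K n)"
    by (rule LIMSEQ_incseq_SUP) (auto intro!: incseq_SucI pK_mono fin bdd_aboveI[of _ 1] pK_bounds)
  then show ?thesis unfolding visit_prob_def pK_def by simp
qed

lemma visit_prob_rec:
  assumes fin: "\<And>n. n > a \<Longrightarrow> finite (set_pmf (Y n))"
    and "n \<noteq> i" "n > a"
  shows "visit_prob Y a i n = (\<Sum>j\<in>set_pmf (Y n). pmf (Y n) j * visit_prob Y a i j)"
proof -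
  have "(\<lambda>K. pK Y a i (Suc K) n) \<longlonglongrightarrow> visit_prob Y a i n"
    using visit_prob_lim[OF fin] by (rule LIMSEQ_Suc)
  moreover have "(\<lambda>K. pK Y a i (Suc K) n) \<longlonglongrightarrow> (\<Sum>j\<in>set_pmf (Y n). pmf (Y n) j * visit_prob Y a i j)"
    unfolding pK_rec[where n=n and i=i and a=a and Y=Y, OF assms(2,3) fin[OF assms(3)]]
    by (intro tendsto_intros visit_prob_lim fin)
  ultimately show ?thesis by (rule LIMSEQ_unique)
qed

lemma visit_prob_bounds: 
  assumes fin: "\<And>n. n > a \<Longrightarrow> finite (set_pmf (Y n))"
  shows "0 \<le> visit_prob Y a i n \<and> visit_prob Y a i n \<le> 1"
proof -
  have L: "(\<lambda>K. pK Y a i K n) \<longlonglongrightarrow> visit_prob Y a i n" by (rule visit_prob_lim[OF fin])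
  show ?thesis
    using LIMSEQ_le_const[OF L] LIMSEQ_le_const2[OF L] pK_bounds by blast
qed


lemma sum_by_parts_nat:
  fixes q h :: "nat \<Rightarrow> real"
  shows "(\<Sum>j\<le>N. q j * h j) = h 0 * (\<Sum>j\<le>N. q j) + (\<Sum>k<N. (h (Suc k) - h k) * (\<Sum>j\<in>{k<..N}. q j))"
proof (induction N)
  case 0 then show ?case by simp
next
  case (Suc N)
  have split: "\<And>k. k < Suc N \<Longrightarrow> {k<..Suc N} = insert (Suc N) {k<..N}" by auto
  have "(\<Sum>k<Suc N. (h (Suc k) - h k) * (\<Sum>j\<in>{k<..Suc N}. q j))
      = (\<Sum>k<Suc N. (h (Suc k) - h k) * (q (Suc N) + (\<Sum>j\<in>{k<..N}. q j)))"
    by (intro sum.cong refl) (simp add: split)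
  also have "\<dots> = q (Suc N) * (\<Sum>k<Suc N. (h (Suc k) - h k)) + (\<Sum>k<Suc N. (h (Suc k) - h k) * (\<Sum>j\<in>{k<..N}. q j))"
    by (simp add: distrib_left sum.distrib sum_distrib_left mult_ac)
  also have "(\<Sum>k<Suc N. (h (Suc k) - h k)) = h (Suc N) - h 0" by (rule sum_lessThan_telescope)
  also have "(\<Sum>k<Suc N. (h (Suc k) - h k) * (\<Sum>j\<in>{k<..N}. q j)) = (\<Sum>k<N. (h (Suc k) - h k) * (\<Sum>j\<in>{k<..N}. q j))"
    by simp
  finally show ?case using Suc.IH by (simp add: algebra_simps)
qed

locale LEA =
  fixes Y :: "nat \<Rightarrow> nat pmf" and \<alpha> \<epsilon> :: real and D :: "nat \<Rightarrow> real"
    and C1 C2 C3 :: real and N0 :: nat and g :: "nat \<Rightarrow> real" and M :: nat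
  assumes supp: "\<And>n. n \<ge> 1 \<Longrightarrow> set_pmf (Y n) \<subseteq> {1..n}"
    and dom: "\<And>n k. n \<ge> 1 \<Longrightarrow> k \<ge> 1 \<Longrightarrow> measure_pmf.prob (Y (Suc n)) {..k} \<le> measure_pmf.prob (Y n) {..k}"
    and alpha: "0 < \<alpha>" "\<alpha> < 1" and eps: "\<epsilon> > 0"
    and Dnn: "\<And>n. D n \<ge> 0"
    and C1: "\<And>n. n \<ge> N0 \<Longrightarrow> measure_pmf.expectation (Y (Suc n)) real - measure_pmf.expectation (Y n) real \<le> \<alpha> + C1 * D n"
    and C2: "\<And>n. n \<ge> N0 \<Longrightarrow> D n \<le> C2 * ln (real n) powr (-1-\<epsilon>)"
    and C3: "\<And>n. n \<ge> N0 \<Longrightarrow> measure_pmf.prob (Y n) {k. \<bar>real k - \<alpha> * real n\<bar> > D n * real n} \<le> C3 * real n powr (-2-\<epsilon>)"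
    and Cpos: "C1 \<ge> 0" "C2 > 0" "C3 \<ge> 0"
    and gb: "\<And>n. \<bar>g n\<bar> \<le> 1"
    and grec: "\<And>n. n \<ge> M \<Longrightarrow> g n = (\<Sum>j\<le>n. pmf (Y n) j * g j)"
begin

abbreviation "P n A \<equiv> measure_pmf.prob (Y n) A"

lemma pmf_out: "n \<ge> 1 \<Longrightarrow> j > n \<Longrightarrow> pmf (Y n) j = 0"
  using supp[of n] by (auto simp: set_pmf_eq)

lemma sum_ext: assumes "n \<ge> 1" "N \<ge> n"
  shows "(\<Sum>j\<le>N. pmf (Y n) j * h j) = (\<Sum>j\<le>n. pmf (Y n) j * h j)"
  by (rule sum.mono_neutral_right) (use assms pmf_out in auto)

lemma P_fin: assumes "n \<ge> 1" "A \<subseteq> {..N}" "N \<ge> n"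
  shows "P n A = (\<Sum>j\<in>A. pmf (Y n) j)"
  using assms finite_subset by (intro measure_measure_pmf_finite) auto

lemma P_restrict: assumes "n \<ge> 1" "N \<ge> n"
  shows "P n A = P n (A \<inter> {..N})"
proof -
  have "P n A = P n (A \<inter> set_pmf (Y n))" by (simp add: measure_Int_set_pmf)
  also have "A \<inter> set_pmf (Y n) = (A \<inter> {..N}) \<inter> set_pmf (Y n)" using supp[OF assms(1)] assms by auto
  also have "P n \<dots> = P n (A \<inter> {..N})" by (simp add: measure_Int_set_pmf)
  finally show ?thesis .
qed

lemma sum_one: assumes "n \<ge> 1" "N \<ge> n" shows "(\<Sum>j\<le>N. pmf (Y n) j) = 1"
proof -
  have "P n UNIV = P n (UNIV \<inter> {..N})" using P_restrict assms by blast
  then show ?thesis using P_fin[OF assms(1) _ assms(2), of "{..N}"] by simp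
qed

lemma expect_sum: assumes "n \<ge> 1" "N \<ge> n"
  shows "measure_pmf.expectation (Y n) h = (\<Sum>j\<le>N. pmf (Y n) j * h j)"
  using assms supp[OF assms(1)]
  by (subst integral_measure_pmf_real[where A="{..N}"]) (auto simp: mult.commute)

lemma by_parts: assumes "n \<ge> 1" "N \<ge> n"
  shows "(\<Sum>j\<le>N. pmf (Y n) j * h j) = h 0 + (\<Sum>k<N. (h (Suc k) - h k) * P n {k<..})"
proof -
  have "\<And>k. P n {k<..} = (\<Sum>j\<in>{k<..N}. pmf (Y n) j)"
  proof -
    fix k
    have "P n {k<..} = P n ({k<..} \<inter> {..N})" using P_restrict assms by blast
    also have "{k<..} \<inter> {..N} = {k<..N}" by auto
    also have "P n {k<..N} = (\<Sum>j\<in>{k<..N}. pmf (Y n) j)" by (rule P_fin[OF assms(1) _ assms(2)]) auto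
    finally show "P n {k<..} = (\<Sum>j\<in>{k<..N}. pmf (Y n) j)" .
  qed
  then show ?thesis using sum_by_parts_nat[of "pmf (Y n)" h N] sum_one[OF assms] by simp
qed

definition w :: "nat \<Rightarrow> nat \<Rightarrow> real" where
  "w n k = P (Suc n) {k<..} - P n {k<..}"

lemma w_alt: "w n k = P n {..k} - P (Suc n) {..k}"
proof -
  have c: "\<And>m. P m {k<..} = 1 - P m {..k}"
  proof -
    fix m
    have "{k<..} = UNIV - {..k}" by auto
    moreover have "P m (UNIV - {..k}) = 1 - P m {..k}" using measure_pmf.prob_compl[of "{..k}" "Y m"] by simp
    ultimately show "P m {k<..} = 1 - P m {..k}" by simp
  qed
  show ?thesis unfolding w_def c by simp
qed

lemma w_nonneg: assumes "n \<ge> 1" shows "w n k \<ge> 0"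
proof (cases "k \<ge> 1")
  case True then show ?thesis unfolding w_alt using dom[OF assms True] by simp
next
  case False
  then have "k = 0" by simp
  have "P m {..0} = 0" if "m \<ge> 1" for m
    using supp[OF that] by (subst measure_pmf_zero_iff) auto
  then show ?thesis unfolding w_alt using \<open>k = 0\<close> assms by simp
qed

lemma diff_formula: assumes "n \<ge> 1"
  shows "(\<Sum>j\<le>Suc n. pmf (Y (Suc n)) j * h j) - (\<Sum>j\<le>n. pmf (Y n) j * h j)
       = (\<Sum>k<Suc n. (h (Suc k) - h k) * w n k)"
proof -
  have e1: "(\<Sum>j\<le>n. pmf (Y n) j * h j) = (\<Sum>j\<le>Suc n. pmf (Y n) j * h j)"
    using sum_ext[OF assms, of "Suc n"] by simp
  have e2: "(\<Sum>j\<le>Suc n. pmf (Y n) j * h j) = h 0 + (\<Sum>k<Suc n. (h (Suc k) - h k) * P n {k<..})"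
    using by_parts[OF assms, of "Suc n" h] by simp
  have e3: "(\<Sum>j\<le>Suc n. pmf (Y (Suc n)) j * h j) = h 0 + (\<Sum>k<Suc n. (h (Suc k) - h k) * P (Suc n) {k<..})"
    using by_parts[of "Suc n" "Suc n" h] by simp
  have "(\<Sum>j\<le>Suc n. pmf (Y (Suc n)) j * h j) - (\<Sum>j\<le>n. pmf (Y n) j * h j)
     = (\<Sum>k<Suc n. (h (Suc k) - h k) * P (Suc n) {k<..}) - (\<Sum>k<Suc n. (h (Suc k) - h k) * P n {k<..})"
    unfolding e1 e2 e3 by simp
  also have "\<dots> = (\<Sum>k<Suc n. (h (Suc k) - h k) * P (Suc n) {k<..} - (h (Suc k) - h k) * P n {k<..})"
    by (rule sum_subtractf[symmetric])
  also have "\<dots> = (\<Sum>k<Suc n. (h (Suc k) - h k) * w n k)"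
    unfolding w_def by (intro sum.cong refl) (simp add: right_diff_distrib)
  finally show ?thesis .
qed

lemma sum_w: assumes "n \<ge> 1"
  shows "(\<Sum>k<Suc n. w n k) = measure_pmf.expectation (Y (Suc n)) real - measure_pmf.expectation (Y n) real"
proof -
  have "measure_pmf.expectation (Y (Suc n)) real = (\<Sum>j\<le>Suc n. pmf (Y (Suc n)) j * real j)"
    by (rule expect_sum) auto
  moreover have "measure_pmf.expectation (Y n) real = (\<Sum>j\<le>n. pmf (Y n) j * real j)"
    by (rule expect_sum) (use assms in auto)
  ultimately show ?thesis using diff_formula[OF assms, of real] by simp
qed

definition d :: "nat \<Rightarrow> real" where "d k = \<bar>g (Suc k) - g k\<bar>"

lemma d_le2: "d k \<le> 2"
  unfolding d_def using gb[of k] gb[of "Suc k"] by linarith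

lemma d_rec: assumes "n \<ge> 1" "n \<ge> M"
  shows "d n \<le> (\<Sum>k<Suc n. d k * w n k)"
proof -
  have a: "g (Suc n) = (\<Sum>j\<le>Suc n. pmf (Y (Suc n)) j * g j)" by (rule grec) (use assms in simp)
  have b: "g n = (\<Sum>j\<le>n. pmf (Y n) j * g j)" by (rule grec) (use assms in simp)
  have "g (Suc n) - g n = (\<Sum>k<Suc n. (g (Suc k) - g k) * w n k)"
    using diff_formula[OF assms(1), of g] a b by linarith
  then have "d n = \<bar>\<Sum>k<Suc n. (g (Suc k) - g k) * w n k\<bar>" unfolding d_def by simp
  also have "\<dots> \<le> (\<Sum>k<Suc n. \<bar>(g (Suc k) - g k) * w n k\<bar>)" by (rule sum_abs)
  also have "\<dots> = (\<Sum>k<Suc n. d k * w n k)"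
    using w_nonneg[OF assms(1)] by (intro sum.cong refl) (simp add: d_def abs_mult)
  finally show ?thesis .
qed

end


lemma powr_diff_ineq:
  fixes u v e :: real
  assumes "0 < u" "u \<le> v" "e > 0"
  shows "u powr (-e) - v powr (-e) \<ge> e * (v - u) * v powr (-1-e)"
proof -
  define r where "r = u / v"
  have v: "v > 0" using assms by simp
  have r: "0 < r" "r \<le> 1" using assms v by (auto simp: r_def field_simps)
  have u: "u = v * r" using v by (simp add: r_def)
  have uu: "u powr (-e) = v powr (-e) * r powr (-e)" unfolding u using v r by (simp add: powr_mult)
  have rin: "r powr (-e) \<ge> 1 + e * (1 - r)"
  proof -
    have "r powr (-e) = exp (-e * ln r)" using r by (simp add: powr_def)
    also have "\<dots> \<ge> 1 + (-e * ln r)" by (rule exp_ge_add_one_self)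
    finally have a: "r powr (-e) \<ge> 1 - e * ln r" by simp
    have "ln r \<le> r - 1" using r by (intro ln_le_minus_one) auto
    then have "e * ln r \<le> e * (r - 1)" using assms(3) by (intro mult_left_mono) auto
    then show ?thesis using a by (simp add: algebra_simps)
  qed
  have "u powr (-e) - v powr (-e) = v powr (-e) * (r powr (-e) - 1)"
    unfolding uu by (simp add: right_diff_distrib)
  also have "\<dots> \<ge> v powr (-e) * (e * (1 - r))"
    by (intro mult_left_mono) (use rin in auto)
  finally have A: "u powr (-e) - v powr (-e) \<ge> v powr (-e) * (e * (1 - r))" .
  have vv: "v powr (-1-e) = v powr (-e) / v"
  proof -
    have "v powr (-1-e) = v powr (-e - 1)" by (rule arg_cong[where f="\<lambda>z. v powr z"]) simp
    also have "\<dots> = v powr (-e) / v powr 1" by (rule powr_diff)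
    finally show ?thesis using v by simp
  qed
  have "v powr (-e) * (e * (1 - r)) = e * (v - u) * v powr (-1-e)"
    unfolding vv using v by (simp add: r_def field_simps)
  then show ?thesis using A by metis
qed

definition Phi :: "real \<Rightarrow> real \<Rightarrow> real \<Rightarrow> real" where
  "Phi K e x = exp (- K * ln x powr (-e))"

lemma Phi_pos: "Phi K e x > 0" unfolding Phi_def by simp

lemma Phi_le1: "K \<ge> 0 \<Longrightarrow> Phi K e x \<le> 1"
  unfolding Phi_def by simp

lemma Phi_mono: assumes "K \<ge> 0" "e > 0" "1 < x" "x \<le> y" shows "Phi K e x \<le> Phi K e y"
proof -
  have "ln x > 0" "ln x \<le> ln y" using assms by auto
  then have "ln y powr (-e) \<le> ln x powr (-e)" using assms by (intro powr_mono2') auto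
  then have "K * ln y powr (-e) \<le> K * ln x powr (-e)" using assms by (intro mult_left_mono) auto
  then show ?thesis unfolding Phi_def by simp
qed

lemma Phi_ratio:
  assumes "K \<ge> 0" "e > 0" "0 < \<beta>" "\<beta> < 1" "1 < \<beta> * x"
  shows "Phi K e x \<ge> Phi K e (\<beta> * x) * (1 + K * e * (- ln \<beta>) * ln x powr (-1-e))"
proof -
  have x: "x > 0"
  proof (rule ccontr)
    assume "\<not> x > 0"
    then have "\<beta> * x \<le> 0" using assms(3) by (simp add: mult_nonneg_nonpos)
    then show False using assms(5) by simp
  qed
  define u where "u = ln (\<beta> * x)"
  define v where "v = ln x"
  have u: "u > 0" using assms unfolding u_def by simp
  have uv: "u = ln \<beta> + v" unfolding u_def v_def using assms x by (simp add: ln_mult)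
  have lb: "ln \<beta> < 0" using assms by simp
  have "u \<le> v" using uv lb by simp
  have D: "u powr (-e) - v powr (-e) \<ge> e * (- ln \<beta>) * v powr (-1-e)"
    using powr_diff_ineq[OF u \<open>u \<le> v\<close> assms(2)] uv by simp
  have "Phi K e x = Phi K e (\<beta> * x) * exp (K * (u powr (-e) - v powr (-e)))"
    unfolding Phi_def u_def v_def by (simp add: exp_add[symmetric] algebra_simps)
  also have "\<dots> \<ge> Phi K e (\<beta> * x) * (1 + K * (u powr (-e) - v powr (-e)))"
    by (intro mult_left_mono exp_ge_add_one_self less_imp_le[OF Phi_pos])
  finally have A: "Phi K e x \<ge> Phi K e (\<beta> * x) * (1 + K * (u powr (-e) - v powr (-e)))" .
  have "K * (e * (- ln \<beta>) * v powr (-1-e)) \<le> K * (u powr (-e) - v powr (-e))"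
    using D assms(1) by (intro mult_left_mono) auto
  then have "Phi K e (\<beta> * x) * (1 + K * e * (- ln \<beta>) * ln x powr (-1-e)) \<le> Phi K e (\<beta> * x) * (1 + K * (u powr (-e) - v powr (-e)))"
    unfolding v_def by (intro mult_left_mono less_imp_le[OF Phi_pos]) (simp add: mult_ac)
  then show ?thesis using A by linarith
qed


context LEA begin

definition T :: "nat \<Rightarrow> nat set" where "T n = {k. \<bar>real k - \<alpha> * real n\<bar> > D n * real n}"

lemma w_out_low: assumes "n \<ge> 1" "real k < (\<alpha> - D n) * real n"
  shows "w n k \<le> P n (T n)"
proof -
  have "w n k \<le> P n {..k}" unfolding w_alt by simp
  also have "\<dots> \<le> P n (T n)"
  proof (rule measure_pmf.finite_measure_mono)
    show "{..k} \<subseteq> T n"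
    proof
      fix j assume "j \<in> {..k}"
      then have "real j \<le> real k" by simp
      then have "\<alpha> * real n - real j > D n * real n" using assms(2) by (simp add: algebra_simps)
      then show "j \<in> T n" unfolding T_def by simp
    qed
  qed simp
  finally show ?thesis .
qed

lemma w_out_high: assumes "n \<ge> 1" "real k \<ge> (\<alpha> + D (Suc n)) * real (Suc n)"
  shows "w n k \<le> P (Suc n) (T (Suc n))"
proof -
  have "w n k \<le> P (Suc n) {k<..}" unfolding w_def by simp
  also have "\<dots> \<le> P (Suc n) (T (Suc n))"
  proof (rule measure_pmf.finite_measure_mono)
    show "{k<..} \<subseteq> T (Suc n)"
    proof
      fix j assume "j \<in> {k<..}"
      then have "real j > real k" by simp
      then have "real j - \<alpha> * real (Suc n) > D (Suc n) * real (Suc n)" using assms(2) by (simp add: algebra_simps)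
      then show "j \<in> T (Suc n)" unfolding T_def by simp
    qed
  qed simp
  finally show ?thesis .
qed

lemma tail_bound: "n \<ge> N0 \<Longrightarrow> P n (T n) \<le> C3 * real n powr (-2-\<epsilon>)"
  unfolding T_def using C3 by simp


lemma growth_step:
  fixes B K \<beta> \<gamma> :: real and n :: nat
  assumes n1: "n \<ge> 1" and nM: "n \<ge> M" and nN0: "n \<ge> N0"
    and Dn: "D n \<le> \<gamma>" and DSn: "D (Suc n) \<le> \<gamma>" and g4: "\<gamma> \<le> \<alpha> / 4"
    and win: "(\<alpha> + \<gamma>) * (real n + 1) \<le> \<beta> * real n" and b1: "\<beta> < 1"
    and low: "3 \<le> (\<alpha> - \<gamma>) * real n"
    and IH: "\<And>k. 3 \<le> k \<Longrightarrow> k < n \<Longrightarrow> d k * real k \<le> B * Phi K \<epsilon> (real k)"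
    and K: "K \<ge> 0" and B: "B \<ge> 0"
  shows "d n * real n \<le> B * Phi K \<epsilon> (\<beta> * real n) * (\<alpha> + C1 * D n) / (\<alpha> - D n) + 8 * C3 * real n powr (-\<epsilon>)"
proof -
  define W where "W = {k\<in>{..<Suc n}. (\<alpha> - D n) * real n \<le> real k \<and> real k < (\<alpha> + D (Suc n)) * real (Suc n)}"
  define c where "c = B * Phi K \<epsilon> (\<beta> * real n) / ((\<alpha> - D n) * real n)"
  have npos: "real n > 0" using n1 by simp
  have g0: "\<gamma> \<ge> 0" using Dnn[of n] Dn by linarith
  have aD: "\<alpha> - D n \<ge> 3 * \<alpha> / 4" using Dn g4 by simp
  have aDpos: "(\<alpha> - D n) * real n > 0" using aD alpha npos by simp
  have Phipos: "Phi K \<epsilon> (\<beta> * real n) > 0" by (rule Phi_pos)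
  have c0: "c \<ge> 0" unfolding c_def using B Phipos aDpos by simp
  have wn: "\<And>k. w n k \<ge> 0" using w_nonneg n1 by simp
  have Wsub: "W \<subseteq> {..<Suc n}" unfolding W_def by auto
  have dW: "d k \<le> c" if k: "k \<in> W" for k
  proof -
    have k1: "(\<alpha> - D n) * real n \<le> real k" using k unfolding W_def by auto
    have "(\<alpha> - \<gamma>) * real n \<le> (\<alpha> - D n) * real n" using Dn npos by (intro mult_right_mono) auto
    then have k3r: "3 \<le> real k" using k1 low by linarith
    then have k3: "3 \<le> k" by linarith
    have "real k < (\<alpha> + D (Suc n)) * real (Suc n)" using k unfolding W_def by auto
    also have "\<dots> \<le> (\<alpha> + \<gamma>) * (real n + 1)" using DSn by (intro mult_mono) (use g0 alpha(1) Dnn in auto)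
    also have "\<dots> \<le> \<beta> * real n" by (rule win)
    finally have kb: "real k < \<beta> * real n" .
    have "\<beta> * real n < real n" using b1 npos by simp
    then have kn: "k < n" using kb by linarith
    have "d k * real k \<le> B * Phi K \<epsilon> (real k)" using IH[OF k3 kn] .
    also have "\<dots> \<le> B * Phi K \<epsilon> (\<beta> * real n)"
      using B K eps k3r kb by (intro mult_left_mono Phi_mono) auto
    finally have A: "d k * real k \<le> B * Phi K \<epsilon> (\<beta> * real n)" .
    have "d k = d k * real k / real k" using k3r by simp
    also have "\<dots> \<le> B * Phi K \<epsilon> (\<beta> * real n) / real k" using A k3r by (intro divide_right_mono) auto
    also have "\<dots> \<le> B * Phi K \<epsilon> (\<beta> * real n) / ((\<alpha> - D n) * real n)"
      using k1 aDpos B Phipos by (intro divide_left_mono) auto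
    finally show ?thesis unfolding c_def .
  qed
  have S1: "(\<Sum>k\<in>W. d k * w n k) \<le> c * (\<alpha> + C1 * D n)"
  proof -
    have "(\<Sum>k\<in>W. d k * w n k) \<le> (\<Sum>k\<in>W. c * w n k)"
      using dW wn by (intro sum_mono mult_right_mono) auto
    also have "\<dots> = c * (\<Sum>k\<in>W. w n k)" by (simp add: sum_distrib_left)
    also have "(\<Sum>k\<in>W. w n k) \<le> (\<Sum>k<Suc n. w n k)"
      using Wsub wn by (intro sum_mono2) auto
    also have "\<dots> \<le> \<alpha> + C1 * D n" using sum_w[OF n1] C1[OF nN0] by simp
    finally show ?thesis using c0 by (simp add: mult_left_mono)
  qed
  define \<tau> where "\<tau> = P n (T n) + P (Suc n) (T (Suc n))"
  have tau: "\<tau> \<le> 2 * C3 * real n powr (-2-\<epsilon>)"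
  proof -
    have "P n (T n) \<le> C3 * real n powr (-2-\<epsilon>)" using tail_bound nN0 by simp
    moreover have "P (Suc n) (T (Suc n)) \<le> C3 * real (Suc n) powr (-2-\<epsilon>)" by (rule tail_bound) (use nN0 in simp)
    moreover have "real (Suc n) powr (-2-\<epsilon>) \<le> real n powr (-2-\<epsilon>)"
      using npos eps by (intro powr_mono2') auto
    then have "C3 * real (Suc n) powr (-2-\<epsilon>) \<le> C3 * real n powr (-2-\<epsilon>)" using Cpos by (intro mult_left_mono) auto
    ultimately show ?thesis unfolding \<tau>_def by simp
  qed
  have S2: "(\<Sum>k\<in>{..<Suc n} - W. d k * w n k) \<le> 8 * C3 * real n powr (-1-\<epsilon>)"
  proof -
    have "(\<Sum>k\<in>{..<Suc n} - W. d k * w n k) \<le> (\<Sum>k\<in>{..<Suc n} - W. 2 * \<tau>)"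
    proof (intro sum_mono)
      fix k assume k: "k \<in> {..<Suc n} - W"
      have wt: "w n k \<le> \<tau>"
      proof (cases "real k < (\<alpha> - D n) * real n")
        case True
        then have "w n k \<le> P n (T n)" using w_out_low n1 by simp
        then show ?thesis unfolding \<tau>_def by (simp add: add_increasing2)
      next
        case False
        then have "real k \<ge> (\<alpha> + D (Suc n)) * real (Suc n)" using k unfolding W_def by auto
        then have "w n k \<le> P (Suc n) (T (Suc n))" using w_out_high n1 by simp
        then show ?thesis unfolding \<tau>_def by (simp add: add_increasing)
      qed
      have "d k * w n k \<le> 2 * w n k" using d_le2 wn by (intro mult_right_mono) auto
      also have "\<dots> \<le> 2 * \<tau>" using wt by simp
      finally show "d k * w n k \<le> 2 * \<tau>" .
    qed
    also have "\<dots> = real (card ({..<Suc n} - W)) * (2 * \<tau>)" by simp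
    also have "\<dots> \<le> real (Suc n) * (2 * \<tau>)"
    proof (intro mult_right_mono)
      have "card ({..<Suc n} - W) \<le> card {..<Suc n}" by (intro card_mono) auto
      then show "real (card ({..<Suc n} - W)) \<le> real (Suc n)" by simp
      show "0 \<le> 2 * \<tau>" unfolding \<tau>_def by simp
    qed
    also have "\<dots> \<le> (2 * real n) * (2 * (2 * C3 * real n powr (-2-\<epsilon>)))"
      using tau n1 by (intro mult_mono) (auto simp: \<tau>_def)
    also have "\<dots> = 8 * C3 * (real n * real n powr (-2-\<epsilon>))" by simp
    also have "real n * real n powr (-2-\<epsilon>) = real n powr (-1-\<epsilon>)"
    proof -
      have "real n * real n powr (-2-\<epsilon>) = real n powr 1 * real n powr (-2-\<epsilon>)" using npos by simp
      also have "\<dots> = real n powr (1 + (-2-\<epsilon>))" by (rule powr_add[symmetric])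
      finally show ?thesis by simp
    qed
    finally show ?thesis .
  qed
  have "d n \<le> (\<Sum>k<Suc n. d k * w n k)" using d_rec n1 nM by simp
  also have "\<dots> = (\<Sum>k\<in>{..<Suc n} - W. d k * w n k) + (\<Sum>k\<in>W. d k * w n k)"
    using Wsub by (intro sum.subset_diff) auto
  finally have dn: "d n \<le> c * (\<alpha> + C1 * D n) + 8 * C3 * real n powr (-1-\<epsilon>)" using S1 S2 by linarith
  have "d n * real n \<le> (c * (\<alpha> + C1 * D n) + 8 * C3 * real n powr (-1-\<epsilon>)) * real n"
    using dn npos by (intro mult_right_mono) auto
  also have "\<dots> = c * real n * (\<alpha> + C1 * D n) + 8 * C3 * (real n powr (-1-\<epsilon>) * real n)"
    by (simp add: algebra_simps)
  also have "real n powr (-1-\<epsilon>) * real n = real n powr (-\<epsilon>)"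
  proof -
    have "real n powr (-1-\<epsilon>) * real n = real n powr (-1-\<epsilon>) * real n powr 1" using npos by simp
    also have "\<dots> = real n powr ((-1-\<epsilon>) + 1)" by (rule powr_add[symmetric])
    finally show ?thesis by simp
  qed
  also have "c * real n = B * Phi K \<epsilon> (\<beta> * real n) / (\<alpha> - D n)"
    unfolding c_def using npos by simp
  finally show ?thesis by simp
qed


lemma d_bound: "\<exists>B>0. \<forall>k\<ge>1. d k * real k \<le> B"
proof -
  define \<gamma> where "\<gamma> = min \<alpha> (1 - \<alpha>) / 4"
  have g0: "\<gamma> > 0" "\<gamma> \<le> \<alpha> / 4" "\<gamma> \<le> (1 - \<alpha>) / 4" unfolding \<gamma>_def using alpha by auto
  define \<beta> where "\<beta> = \<alpha> + 2 * \<gamma>"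
  have b: "0 < \<beta>" "\<beta> < 1" unfolding \<beta>_def using g0 alpha by auto
  define b where "b = - ln \<beta>"
  have bpos: "b > 0" unfolding b_def using b by simp
  define A where "A = 2 * (C1 + 1) * C2 / \<alpha>"
  have Apos: "A > 0" unfolding A_def using Cpos alpha by simp
  define K where "K = 2 * A / (\<epsilon> * b)"
  have K0: "K \<ge> 0" unfolding K_def using Apos eps bpos by simp
  have Keb: "K * \<epsilon> * (- ln \<beta>) = 2 * A" unfolding K_def b_def[symmetric] using eps bpos by simp
  define \<phi>0 where "\<phi>0 = Phi K \<epsilon> 3"
  have phi0: "\<phi>0 > 0" unfolding \<phi>0_def by (rule Phi_pos)
  have ev1: "eventually (\<lambda>n::nat. (\<alpha>+\<gamma>)*(real n+1) \<le> (\<alpha> + 2*\<gamma>) * real n) at_top"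
    using g0 alpha by real_asymp
  have ev2: "eventually (\<lambda>n::nat. C2 * ln (real n) powr (-1-\<epsilon>) \<le> \<gamma>) at_top"
    using g0 eps Cpos by real_asymp
  have ag: "\<alpha> - \<gamma> > 0" using g0 alpha by simp
  have ev3: "eventually (\<lambda>n::nat. 3 \<le> (\<alpha> - \<gamma>) * real n) at_top"
    using ag by real_asymp
  have ev4: "eventually (\<lambda>n::nat. real n powr (-\<epsilon>) \<le> ln (real n) powr (-1-\<epsilon>)) at_top"
    using eps by real_asymp
  have ev5: "eventually (\<lambda>n::nat. n \<ge> N0 \<and> n \<ge> M \<and> n \<ge> 1) at_top"
    by (intro eventually_conj eventually_ge_at_top)
  have "eventually (\<lambda>n::nat. (\<alpha>+\<gamma>)*(real n+1) \<le> (\<alpha> + 2*\<gamma>) * real n \<and> C2 * ln (real n) powr (-1-\<epsilon>) \<le> \<gamma>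
     \<and> 3 \<le> (\<alpha> - \<gamma>) * real n \<and> real n powr (-\<epsilon>) \<le> ln (real n) powr (-1-\<epsilon>) \<and> n \<ge> N0 \<and> n \<ge> M \<and> n \<ge> 1) at_top"
    using ev1 ev2 ev3 ev4 ev5 by eventually_elim blast
  then obtain N2 where N2: "\<And>n. n \<ge> N2 \<Longrightarrow> (\<alpha>+\<gamma>)*(real n+1) \<le> \<beta> * real n \<and> C2 * ln (real n) powr (-1-\<epsilon>) \<le> \<gamma>
     \<and> 3 \<le> (\<alpha> - \<gamma>) * real n \<and> real n powr (-\<epsilon>) \<le> ln (real n) powr (-1-\<epsilon>) \<and> n \<ge> N0 \<and> n \<ge> M \<and> n \<ge> 1"
    unfolding eventually_at_top_linorder \<beta>_def by blast
  define B where "B = max (2 * real N2 / \<phi>0) (8 * C3 / (\<phi>0 * A)) + 1"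
  have B1: "B * \<phi>0 \<ge> 2 * real N2"
  proof -
    have "2 * real N2 / \<phi>0 \<le> B" unfolding B_def by linarith
    then show ?thesis using phi0 by (simp add: pos_divide_le_eq)
  qed
  have B2: "B * \<phi>0 * A \<ge> 8 * C3"
  proof -
    have "8 * C3 / (\<phi>0 * A) \<le> B" unfolding B_def by linarith
    then show ?thesis using phi0 Apos by (simp add: pos_divide_le_eq mult_ac)
  qed
  have Bpos: "B > 0"
  proof -
    have "0 \<le> 2 * real N2 / \<phi>0" using phi0 by simp
    then show ?thesis unfolding B_def using max.cobounded1[of "2 * real N2 / \<phi>0" "8 * C3 / (\<phi>0 * A)"] by linarith
  qed
  have claim: "d n * real n \<le> B * Phi K \<epsilon> (real (max n 3))" if "n \<ge> 1" for n
    using that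
  proof (induction n rule: less_induct)
    case (less n)
    show ?case
    proof (cases "n < N2")
      case True
      have "d n * real n \<le> 2 * real n" using d_le2 by (intro mult_right_mono) auto
      also have "\<dots> \<le> 2 * real N2" using True by simp
      also have "\<dots> \<le> B * \<phi>0" by (rule B1)
      also have "\<dots> \<le> B * Phi K \<epsilon> (real (max n 3))"
        unfolding \<phi>0_def using Bpos K0 eps by (intro mult_left_mono Phi_mono) auto
      finally show ?thesis .
    next
      case False
      then have nN: "n \<ge> N2" by simp
      note Nn = N2[OF nN]
      have NSn: "C2 * ln (real (Suc n)) powr (-1-\<epsilon>) \<le> \<gamma>" using N2[of "Suc n"] nN by simp
      have Dn: "D n \<le> C2 * ln (real n) powr (-1-\<epsilon>)" using C2 Nn by simp
      have DSn: "D (Suc n) \<le> \<gamma>" using C2[of "Suc n"] Nn NSn by simp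
      have Dng: "D n \<le> \<gamma>" using Dn Nn by linarith
      have n3: "real n \<ge> 3"
      proof -
        have "(\<alpha> - \<gamma>) * real n \<le> 1 * real n" using alpha g0 by (intro mult_right_mono) auto
        then show ?thesis using Nn by linarith
      qed
      have bn3: "3 \<le> \<beta> * real n"
      proof -
        have "(\<alpha> - \<gamma>) * real n \<le> \<beta> * real n" unfolding \<beta>_def using g0 by (intro mult_right_mono) auto
        then show ?thesis using Nn by linarith
      qed
      have IH: "d k * real k \<le> B * Phi K \<epsilon> (real k)" if "3 \<le> k" "k < n" for k
        using less.IH[of k] that by (simp add: max_def)
      have step: "d n * real n \<le> B * Phi K \<epsilon> (\<beta> * real n) * (\<alpha> + C1 * D n) / (\<alpha> - D n) + 8 * C3 * real n powr (-\<epsilon>)"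
        by (rule growth_step[OF _ _ _ Dng DSn g0(2) _ b(2) _ IH K0 less_imp_le[OF Bpos]]) (use Nn in auto)
      define L where "L = ln (real n) powr (-1-\<epsilon>)"
      have L0: "L \<ge> 0" unfolding L_def by simp
      have aD: "\<alpha> - D n > 0" using Dng g0 alpha by linarith
      have ratio: "(\<alpha> + C1 * D n) / (\<alpha> - D n) \<le> 1 + A * L"
      proof -
        have D0: "D n \<ge> 0" by (rule Dnn)
        have "2 * (C1 + 1) * D n / \<alpha> \<le> A * L"
          unfolding A_def L_def using Dn alpha Cpos D0
          by (simp add: divide_right_mono mult_left_mono mult.assoc)
        then have "(1 + 2 * (C1 + 1) * D n / \<alpha>) * (\<alpha> - D n) \<le> (1 + A * L) * (\<alpha> - D n)"
          using aD by (intro mult_right_mono) auto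
        moreover have "\<alpha> + C1 * D n \<le> (1 + 2 * (C1 + 1) * D n / \<alpha>) * (\<alpha> - D n)"
        proof -
          have "(C1 + 1) * D n * (2 * D n / \<alpha>) \<le> (C1 + 1) * D n * 1"
            using Dng g0 alpha Cpos D0 by (intro mult_left_mono) (auto simp: divide_le_eq)
          then show ?thesis using alpha by (simp add: field_simps)
        qed
        ultimately have "\<alpha> + C1 * D n \<le> (1 + A * L) * (\<alpha> - D n)" by linarith
        then show ?thesis using aD by (simp add: pos_divide_le_eq)
      qed
      have pr: "Phi K \<epsilon> (real n) \<ge> Phi K \<epsilon> (\<beta> * real n) * (1 + K * \<epsilon> * (- ln \<beta>) * L)"
        unfolding L_def by (rule Phi_ratio[OF K0 eps b(1) b(2)]) (use bn3 in linarith)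
      have Phir: "Phi K \<epsilon> (real n) \<ge> Phi K \<epsilon> (\<beta> * real n) * (1 + 2 * A * L)"
        using pr unfolding Keb .
      have Phib: "Phi K \<epsilon> (\<beta> * real n) \<ge> \<phi>0"
        unfolding \<phi>0_def using K0 eps bn3 by (intro Phi_mono) auto
      have tailp: "8 * C3 * real n powr (-\<epsilon>) \<le> B * Phi K \<epsilon> (\<beta> * real n) * A * L"
      proof -
        have "8 * C3 * real n powr (-\<epsilon>) \<le> 8 * C3 * L" unfolding L_def using Nn Cpos by (intro mult_left_mono) auto
        also have "\<dots> \<le> B * \<phi>0 * A * L" using B2 L0 by (intro mult_right_mono) auto
        also have "\<dots> \<le> B * Phi K \<epsilon> (\<beta> * real n) * A * L"
          using Phib Bpos Apos L0 by (intro mult_right_mono mult_left_mono) auto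
        finally show ?thesis .
      qed
      have PB: "B * Phi K \<epsilon> (\<beta> * real n) \<ge> 0" using Bpos Phi_pos[of K \<epsilon> "\<beta> * real n"] by simp
      have "B * Phi K \<epsilon> (\<beta> * real n) * (\<alpha> + C1 * D n) / (\<alpha> - D n) \<le> B * Phi K \<epsilon> (\<beta> * real n) * (1 + A * L)"
        using mult_left_mono[OF ratio PB] by simp
      with step tailp have "d n * real n \<le> B * Phi K \<epsilon> (\<beta> * real n) * (1 + 2 * A * L)"
        by (simp add: algebra_simps)
      also have "\<dots> \<le> B * Phi K \<epsilon> (real n)"
        using mult_left_mono[OF Phir less_imp_le[OF Bpos]] by (simp add: mult_ac)
      finally have "d n * real n \<le> B * Phi K \<epsilon> (real n)" .
      moreover have "max n 3 = n" using n3 by simp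
      ultimately show ?thesis by simp
    qed
  qed
  show ?thesis
  proof (intro exI[of _ B] conjI allI impI Bpos)
    fix k :: nat assume "k \<ge> 1"
    then have "d k * real k \<le> B * Phi K \<epsilon> (real (max k 3))" by (rule claim)
    also have "\<dots> \<le> B * 1" using Bpos Phi_le1[OF K0] by (intro mult_left_mono) auto
    finally show "d k * real k \<le> B" by simp
  qed
qed

end


context LEA begin

definition Bd where "Bd = (SOME B. B > 0 \<and> (\<forall>k\<ge>1. d k * real k \<le> B))"

lemma Bd: "Bd > 0" "\<And>k. k \<ge> 1 \<Longrightarrow> d k * real k \<le> Bd"
  using someI_ex[OF d_bound] unfolding Bd_def by auto

lemma d_le: "k \<ge> 1 \<Longrightarrow> d k \<le> Bd / real k"
  using Bd(2)[of k] by (simp add: pos_le_divide_eq)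

lemma g_lip: assumes "1 \<le> m" "m \<le> n" shows "\<bar>g n - g m\<bar> \<le> Bd * (real n - real m) / real m"
  using assms(2)
proof (induction n rule: dec_induct)
  case base then show ?case by simp
next
  case (step n)
  have "\<bar>g (Suc n) - g m\<bar> \<le> \<bar>g n - g m\<bar> + d n" unfolding d_def by linarith
  also have "d n \<le> Bd / real n" using d_le step assms by simp
  also have "Bd / real n \<le> Bd / real m" using step assms Bd(1) by (intro divide_left_mono) auto
  finally have "\<bar>g (Suc n) - g m\<bar> \<le> Bd * (real n - real m) / real m + Bd / real m" using step by linarith
  also have "\<dots> = Bd * (real (Suc n) - real m) / real m" by (simp add: add_divide_distrib[symmetric] algebra_simps)
  finally show ?case .
qed

lemma g_lip2: assumes "1 \<le> m" "1 \<le> n"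
  shows "\<bar>g n - g m\<bar> \<le> Bd * \<bar>real n - real m\<bar> / min (real n) (real m)"
proof (cases "m \<le> n")
  case True then show ?thesis using g_lip[OF assms(1) True] by (simp add: min_def)
next
  case False
  then have "\<bar>g m - g n\<bar> \<le> Bd * (real m - real n) / real n" using g_lip[OF assms(2)] by simp
  then show ?thesis using False by (simp add: min_def abs_minus_commute)
qed


lemma g_scale: "\<exists>C>0. \<exists>N. \<forall>n\<ge>N. \<bar>g n - g (nat \<lfloor>\<alpha> * real n\<rfloor>)\<bar> \<le> C * ln (real n) powr (-1-\<epsilon>)"
proof -
  have a4: "\<alpha> / 4 > 0" using alpha by simp
  have ev: "eventually (\<lambda>n::nat. C2 * ln (real n) powr (-1-\<epsilon>) \<le> \<alpha> / 4) at_top"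
    using a4 eps Cpos by real_asymp
  have ev2: "eventually (\<lambda>n::nat. 2 \<le> \<alpha> * real n) at_top" using alpha by real_asymp
  have ev3: "eventually (\<lambda>n::nat. 1 / real n \<le> ln (real n) powr (-1-\<epsilon>)) at_top" using eps by real_asymp
  have ev4: "eventually (\<lambda>n::nat. real n powr (-2-\<epsilon>) \<le> ln (real n) powr (-1-\<epsilon>)) at_top" using eps by real_asymp
  have ev5: "eventually (\<lambda>n::nat. n \<ge> N0 \<and> n \<ge> M \<and> n \<ge> 1) at_top"
    by (intro eventually_conj eventually_ge_at_top)
  have "eventually (\<lambda>n::nat. C2 * ln (real n) powr (-1-\<epsilon>) \<le> \<alpha> / 4 \<and> 2 \<le> \<alpha> * real n \<and>
      1 / real n \<le> ln (real n) powr (-1-\<epsilon>) \<and> real n powr (-2-\<epsilon>) \<le> ln (real n) powr (-1-\<epsilon>) \<and>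
      n \<ge> N0 \<and> n \<ge> M \<and> n \<ge> 1) at_top"
    using ev ev2 ev3 ev4 ev5 by eventually_elim blast
  then obtain N where N: "\<And>n. n \<ge> N \<Longrightarrow> C2 * ln (real n) powr (-1-\<epsilon>) \<le> \<alpha> / 4 \<and> 2 \<le> \<alpha> * real n \<and>
      1 / real n \<le> ln (real n) powr (-1-\<epsilon>) \<and> real n powr (-2-\<epsilon>) \<le> ln (real n) powr (-1-\<epsilon>) \<and>
      n \<ge> N0 \<and> n \<ge> M \<and> n \<ge> 1"
    unfolding eventually_at_top_linorder by blast
  define C where "C = 2 * Bd * C2 / \<alpha> + 2 * Bd / \<alpha> + 2 * C3 + 1"
  have Cpos': "C > 0" unfolding C_def using Bd(1) Cpos alpha by (simp add: add_pos_nonneg)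
  show ?thesis
  proof (intro exI[of _ C] exI[of _ N] conjI allI impI Cpos')
    fix n assume nN: "n \<ge> N"
    note Nn = N[OF nN]
    define L where "L = ln (real n) powr (-1-\<epsilon>)"
    define r where "r = nat \<lfloor>\<alpha> * real n\<rfloor>"
    have an0: "\<alpha> * real n \<ge> 2" using Nn by simp
    have r1: "real r \<le> \<alpha> * real n" "real r > \<alpha> * real n - 1"
      unfolding r_def using an0 by linarith+
    have rge: "real r \<ge> \<alpha> * real n / 2" using r1 an0 by linarith
    have r1': "r \<ge> 1" using rge an0 by linarith
    have npos: "real n > 0" using Nn by simp
    have Dn: "D n \<le> C2 * L" unfolding L_def using C2 Nn by simp
    have Dn4: "D n \<le> \<alpha> / 4" using Dn Nn unfolding L_def by linarith
    define c where "c = 2 * Bd * (D n * real n + 1) / (\<alpha> * real n)"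
    have c0: "c \<ge> 0" unfolding c_def using Bd(1) Dnn[of n] alpha npos by simp
    have pt: "pmf (Y n) j * \<bar>g j - g r\<bar> \<le> pmf (Y n) j * c + 2 * (if j \<in> T n then pmf (Y n) j else 0)" for j
    proof (cases "j \<in> T n")
      case True
      have "pmf (Y n) j * \<bar>g j - g r\<bar> \<le> pmf (Y n) j * 2"
        using gb[of j] gb[of r] by (intro mult_left_mono) auto
      moreover have "0 \<le> c * pmf (Y n) j" using c0 by simp
      ultimately show ?thesis using True by (simp add: algebra_simps)
    next
      case False
      then have jd: "\<bar>real j - \<alpha> * real n\<bar> \<le> D n * real n" unfolding T_def by simp
      have "D n * real n \<le> \<alpha> / 4 * real n" using Dn4 npos by (intro mult_right_mono) auto
      then have jge: "real j \<ge> \<alpha> * real n / 2" using jd by linarith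
      then have j1: "j \<ge> 1" using an0 by linarith
      have mn: "min (real j) (real r) \<ge> \<alpha> * real n / 2" using jge rge by simp
      have jr: "\<bar>real j - real r\<bar> \<le> D n * real n + 1" using jd r1 by linarith
      have "\<bar>g j - g r\<bar> \<le> Bd * \<bar>real j - real r\<bar> / min (real j) (real r)" by (rule g_lip2[OF r1' j1])
      also have "\<dots> \<le> Bd * (D n * real n + 1) / min (real j) (real r)"
        using jr Bd(1) mn an0 by (intro divide_right_mono mult_left_mono) auto
      also have "\<dots> \<le> Bd * (D n * real n + 1) / (\<alpha> * real n / 2)"
        using mn an0 Bd(1) Dnn[of n] npos by (intro divide_left_mono) auto
      also have "\<dots> = c" unfolding c_def by simp
      finally have "pmf (Y n) j * \<bar>g j - g r\<bar> \<le> pmf (Y n) j * c" by (intro mult_left_mono) auto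
      then show ?thesis using False by simp
    qed
    have gn: "g n = (\<Sum>j\<le>n. pmf (Y n) j * g j)" using grec Nn by simp
    have gr: "g r = (\<Sum>j\<le>n. pmf (Y n) j * g r)" using sum_one[of n n] Nn by (simp add: sum_distrib_right[symmetric])
    have "g n - g r = (\<Sum>j\<le>n. pmf (Y n) j * (g j - g r))"
      unfolding right_diff_distrib sum_subtractf gn[symmetric] gr[symmetric] ..
    then have "\<bar>g n - g r\<bar> \<le> (\<Sum>j\<le>n. \<bar>pmf (Y n) j * (g j - g r)\<bar>)" by (simp add: sum_abs)
    also have "\<dots> = (\<Sum>j\<le>n. pmf (Y n) j * \<bar>g j - g r\<bar>)" by (simp add: abs_mult)
    also have "\<dots> \<le> (\<Sum>j\<le>n. pmf (Y n) j * c + 2 * (if j \<in> T n then pmf (Y n) j else 0))"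
      by (intro sum_mono pt)
    also have "\<dots> = c * (\<Sum>j\<le>n. pmf (Y n) j) + 2 * (\<Sum>j\<in>{..n} \<inter> T n. pmf (Y n) j)"
      by (simp add: sum.distrib sum_distrib_left sum_distrib_right[symmetric] sum.inter_restrict mult_ac)
    also have "(\<Sum>j\<le>n. pmf (Y n) j) = 1" using sum_one[of n n] Nn by simp
    also have "(\<Sum>j\<in>{..n} \<inter> T n. pmf (Y n) j) = P n ({..n} \<inter> T n)"
      using P_fin[of n "{..n} \<inter> T n" n] Nn by simp
    also have "P n ({..n} \<inter> T n) \<le> P n (T n)" by (intro measure_pmf.finite_measure_mono) auto
    also have "P n (T n) \<le> C3 * real n powr (-2-\<epsilon>)" using tail_bound Nn by simp
    also have "real n powr (-2-\<epsilon>) \<le> L" unfolding L_def using Nn by simp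
    finally have A: "\<bar>g n - g r\<bar> \<le> c + 2 * (C3 * L)" using Cpos by (simp add: mult_left_mono)
    have "c = 2 * Bd / \<alpha> * (D n + 1 / real n)" unfolding c_def using npos alpha by (simp add: field_simps)
    also have "\<dots> \<le> 2 * Bd / \<alpha> * (C2 * L + L)"
      using Dn Nn Bd(1) alpha unfolding L_def by (intro mult_left_mono add_mono) auto
    finally have cb: "c \<le> 2 * Bd / \<alpha> * (C2 * L + L)" .
    have eq: "2 * Bd / \<alpha> * (C2 * L + L) + 2 * (C3 * L) = (2 * Bd * C2 / \<alpha> + 2 * Bd / \<alpha> + 2 * C3) * L"
      using alpha by (simp add: field_simps)
    have "\<bar>g n - g r\<bar> \<le> (2 * Bd * C2 / \<alpha> + 2 * Bd / \<alpha> + 2 * C3) * L"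
      using A cb eq by linarith
    also have "\<dots> \<le> C * L" unfolding C_def L_def by (intro mult_right_mono) auto
    finally show "\<bar>g n - g (nat \<lfloor>\<alpha> * real n\<rfloor>)\<bar> \<le> C * ln (real n) powr (-1-\<epsilon>)"
      unfolding r_def L_def .
  qed
qed

end


lemma conv_from_steps:
  fixes a e :: "nat \<Rightarrow> real"
  assumes st: "\<And>k. \<bar>a (Suc k) - a k\<bar> \<le> e k" and se: "summable e"
  shows "convergent a" "\<bar>lim a - a 0\<bar> \<le> suminf e"
proof -
  have sa: "summable (\<lambda>k. \<bar>a (Suc k) - a k\<bar>)"
    by (rule summable_comparison_test'[OF se]) (use st in auto)
  have s: "summable (\<lambda>k. a (Suc k) - a k)" by (rule summable_rabs_cancel[OF sa])
  have "(\<lambda>n. a 0 + (\<Sum>k<n. a (Suc k) - a k)) \<longlonglongrightarrow> a 0 + (\<Sum>k. a (Suc k) - a k)"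
    by (intro tendsto_intros summable_LIMSEQ s)
  moreover have "\<And>n. a 0 + (\<Sum>k<n. a (Suc k) - a k) = a n" by (simp add: sum_lessThan_telescope)
  ultimately have L: "a \<longlonglongrightarrow> a 0 + (\<Sum>k. a (Suc k) - a k)" by simp
  then show "convergent a" by (rule convergentI)
  have "lim a = a 0 + (\<Sum>k. a (Suc k) - a k)" using L by (rule limI)
  then have "\<bar>lim a - a 0\<bar> = \<bar>\<Sum>k. a (Suc k) - a k\<bar>" by simp
  also have "\<dots> \<le> (\<Sum>k. \<bar>a (Suc k) - a k\<bar>)" by (rule summable_rabs[OF sa])
  also have "\<dots> \<le> suminf e" by (rule suminf_le[OF st sa se])
  finally show "\<bar>lim a - a 0\<bar> \<le> suminf e" .
qed

context LEA begin

definition xs :: "real \<Rightarrow> nat \<Rightarrow> nat" where "xs t k = nat \<lfloor>t / \<alpha> ^ k\<rfloor>"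

lemma step_bound: "\<exists>C>0. \<exists>N. \<forall>y\<ge>0. nat \<lfloor>y\<rfloor> \<ge> N \<longrightarrow>
    \<bar>g (nat \<lfloor>y\<rfloor>) - g (nat \<lfloor>\<alpha> * y\<rfloor>)\<bar> \<le> C * ln (real (nat \<lfloor>y\<rfloor>)) powr (-1-\<epsilon>)"
proof -
  obtain C N where C: "C > 0" and N: "\<And>n. n \<ge> N \<Longrightarrow> \<bar>g n - g (nat \<lfloor>\<alpha> * real n\<rfloor>)\<bar> \<le> C * ln (real n) powr (-1-\<epsilon>)"
    using g_scale by blast
  have ev2: "eventually (\<lambda>n::nat. 4 \<le> \<alpha> * real n) at_top" using alpha by real_asymp
  have ev3: "eventually (\<lambda>n::nat. 1 / real n \<le> ln (real n) powr (-1-\<epsilon>)) at_top" using eps by real_asymp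
  obtain N' where N': "\<And>n. n \<ge> N' \<Longrightarrow> 4 \<le> \<alpha> * real n \<and> 1 / real n \<le> ln (real n) powr (-1-\<epsilon>)"
    using eventually_conj[OF ev2 ev3] unfolding eventually_at_top_linorder by blast
  define C' where "C' = C + 2 * Bd / \<alpha>"
  have C'pos: "C' > 0" unfolding C'_def using C Bd(1) alpha by (simp add: add_pos_nonneg)
  show ?thesis
  proof (intro exI[of _ C'] exI[of _ "max N N'"] conjI allI impI C'pos)
    fix y :: real assume y0: "y \<ge> 0" and mN: "nat \<lfloor>y\<rfloor> \<ge> max N N'"
    define m where "m = nat \<lfloor>y\<rfloor>"
    have my: "real m \<le> y" "y < real m + 1" unfolding m_def using y0 by linarith+
    have Nm: "4 \<le> \<alpha> * real m" "1 / real m \<le> ln (real m) powr (-1-\<epsilon>)" using N'[of m] mN m_def by auto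
    have mpos: "real m > 0" using Nm(1) by (cases "m = 0") auto
    define r1 where "r1 = nat \<lfloor>\<alpha> * real m\<rfloor>"
    define r2 where "r2 = nat \<lfloor>\<alpha> * y\<rfloor>"
    have am1: "\<alpha> * real m \<le> \<alpha> * y" using my alpha by (intro mult_left_mono) auto
    have "\<alpha> * y < \<alpha> * (real m + 1)" using my alpha by (intro mult_strict_left_mono) auto
    then have am2: "\<alpha> * y < \<alpha> * real m + 1" using alpha by (simp add: algebra_simps)
    note am = am1 am2
    have r1b: "real r1 \<le> \<alpha> * real m" "real r1 > \<alpha> * real m - 1" unfolding r1_def using Nm by linarith+
    have r2b: "real r2 \<le> \<alpha> * y" "real r2 > \<alpha> * y - 1" unfolding r2_def using Nm am by linarith+
    have "r1 \<le> r2" unfolding r1_def r2_def using am by (intro nat_mono floor_mono) auto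
    moreover have "real r2 < real r1 + 2" using r1b r2b am by linarith
    then have "real r2 < real (r1 + 2)" by simp
    then have "r2 < r1 + 2" by (simp only: of_nat_less_iff)
    then have "real r2 \<le> real r1 + 1" by simp
    moreover have "real r1 \<le> real r2" using \<open>r1 \<le> r2\<close> by simp
    ultimately have d12: "\<bar>real r2 - real r1\<bar> \<le> 1" by linarith
    have r1g: "real r1 \<ge> \<alpha> * real m / 2" using r1b Nm by linarith
    have r2g: "real r2 \<ge> \<alpha> * real m / 2" using r2b Nm am by linarith
    have r11: "r1 \<ge> 1" "r2 \<ge> 1" using r1g r2g Nm by linarith+
    have "\<bar>g r2 - g r1\<bar> \<le> Bd * \<bar>real r2 - real r1\<bar> / min (real r2) (real r1)" by (rule g_lip2[OF r11(1) r11(2)])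
    also have "\<dots> \<le> Bd * 1 / min (real r2) (real r1)"
      using d12 Bd(1) r11 by (intro divide_right_mono mult_left_mono) auto
    also have "\<dots> \<le> Bd * 1 / (\<alpha> * real m / 2)"
      using r1g r2g Bd(1) Nm by (intro divide_left_mono) auto
    also have "\<dots> = 2 * Bd / \<alpha> * (1 / real m)" by simp
    also have "\<dots> \<le> 2 * Bd / \<alpha> * ln (real m) powr (-1-\<epsilon>)"
      using Nm Bd(1) alpha by (intro mult_left_mono) auto
    finally have B2: "\<bar>g r2 - g r1\<bar> \<le> 2 * Bd / \<alpha> * ln (real m) powr (-1-\<epsilon>)" .
    have B1: "\<bar>g m - g r1\<bar> \<le> C * ln (real m) powr (-1-\<epsilon>)" unfolding r1_def using N[of m] mN m_def by simp
    have "\<bar>g m - g r2\<bar> \<le> C * ln (real m) powr (-1-\<epsilon>) + 2 * Bd / \<alpha> * ln (real m) powr (-1-\<epsilon>)"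
      using B1 B2 by linarith
    also have "\<dots> = C' * ln (real m) powr (-1-\<epsilon>)" unfolding C'_def by (simp add: algebra_simps)
    finally show "\<bar>g (nat \<lfloor>y\<rfloor>) - g (nat \<lfloor>\<alpha> * y\<rfloor>)\<bar> \<le> C' * ln (real (nat \<lfloor>y\<rfloor>)) powr (-1-\<epsilon>)"
      unfolding m_def r2_def .
  qed
qed


lemma xs_Suc: "xs t k = nat \<lfloor>\<alpha> * (t / \<alpha> ^ Suc k)\<rfloor>"
  unfolding xs_def using alpha by (simp add: field_simps)

lemma scale_conv: "\<exists>T0 C H. T0 > 0 \<and> C \<ge> 0 \<and> H \<ge> 0 \<and> (\<forall>t\<ge>T0. convergent (\<lambda>k. g (xs t k)) \<and>
    \<bar>lim (\<lambda>k. g (xs t k)) - g (xs t 0)\<bar> \<le> C * H * ln (t / 2) powr (-\<epsilon>/2))"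
proof -
  obtain C N where C: "C > 0" and N: "\<And>y. y \<ge> 0 \<Longrightarrow> nat \<lfloor>y\<rfloor> \<ge> N \<Longrightarrow>
      \<bar>g (nat \<lfloor>y\<rfloor>) - g (nat \<lfloor>\<alpha> * y\<rfloor>)\<bar> \<le> C * ln (real (nat \<lfloor>y\<rfloor>)) powr (-1-\<epsilon>)"
    using step_bound by blast
  define b where "b = - ln \<alpha>"
  have b0: "b > 0" unfolding b_def using alpha by simp
  define p where "p = -1 - \<epsilon>/2"
  have p: "p < -1" unfolding p_def using eps by simp
  define h where "h k = (1 + real (Suc k) * b) powr p" for k
  have h0: "h k \<ge> 0" for k unfolding h_def by simp
  have sh: "summable h"
  proof (rule summable_comparison_test')
    show "summable (\<lambda>k. b powr p * real (Suc k) powr p)"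
    proof (intro summable_mult)
      have "summable (\<lambda>n. real n powr p)" using summable_real_powr_iff[of p] p by simp
      then have "summable (\<lambda>n. real (Suc n) powr p)" by (subst summable_Suc_iff)
      then show "summable (\<lambda>k. real (Suc k) powr p)" .
    qed
    fix k :: nat
    have "h k \<le> (real (Suc k) * b) powr p"
      unfolding h_def using p b0 by (intro powr_mono2') auto
    also have "\<dots> = b powr p * real (Suc k) powr p" using b0 by (simp add: powr_mult mult.commute)
    finally show "norm (h k) \<le> b powr p * real (Suc k) powr p" using h0 by simp
  qed
  define T0 where "T0 = max (2 * exp 1) (2 * real N + 2)"
  have T0pos: "T0 > 0" unfolding T0_def by (simp add: max_def)
  define H where "H = suminf h"
  have H0: "H \<ge> 0" unfolding H_def by (intro suminf_nonneg sh h0)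
  have main: "convergent (\<lambda>k. g (xs t k)) \<and>
    \<bar>lim (\<lambda>k. g (xs t k)) - g (xs t 0)\<bar> \<le> C * H * ln (t / 2) powr (-\<epsilon>/2)" if tT: "t \<ge> T0" for t
  proof -
    define s where "s = ln (t / 2)"
    have t2: "t / 2 \<ge> exp 1" using tT unfolding T0_def by simp
    have tpos: "t / 2 > 0" using t2 exp_gt_zero[of 1] by linarith
    have s1: "s \<ge> 1" unfolding s_def using t2 ln_ge_iff[OF tpos, of 1] by simp
    have tN: "t \<ge> 2 * real N + 2" using tT unfolding T0_def by simp
    have stp: "\<bar>g (xs t (Suc k)) - g (xs t k)\<bar> \<le> C * s powr (-\<epsilon>/2) * h k" for k
    proof -
      define y where "y = t / \<alpha> ^ Suc k"
      have ak1: "\<alpha> ^ Suc k > 0" using alpha by simp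
      have ak2: "\<alpha> ^ Suc k \<le> 1" using alpha by (intro power_le_one) auto
      note ak = ak1 ak2
      have yt: "y \<ge> t" unfolding y_def using ak tN by (simp add: le_divide_eq mult_left_le)
      define m where "m = nat \<lfloor>y\<rfloor>"
      have my: "real m > y - 1" "real m \<le> y" unfolding m_def using yt tN by linarith+
      have mN: "m \<ge> N" using my yt tN by linarith
      have ym: "real m \<ge> y / 2" using my yt tN by linarith
      have e1: "xs t (Suc k) = m" unfolding m_def y_def xs_def ..
      have e2: "xs t k = nat \<lfloor>\<alpha> * y\<rfloor>" unfolding y_def by (rule xs_Suc)
      have y0: "y \<ge> 0" using yt tN by linarith
      have A: "\<bar>g m - g (xs t k)\<bar> \<le> C * ln (real m) powr (-1-\<epsilon>)"
        unfolding e2 m_def using N[OF y0] mN m_def by simp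
      have lny: "ln (y / 2) = s + real (Suc k) * b"
      proof -
        have "y / 2 = (t / 2) / \<alpha> ^ Suc k" unfolding y_def by simp
        moreover have "ln ((t / 2) / \<alpha> ^ Suc k) = ln (t / 2) - ln (\<alpha> ^ Suc k)"
          by (rule ln_divide_pos) (use ak tN in auto)
        ultimately have "ln (y / 2) = ln (t / 2) - ln (\<alpha> ^ Suc k)" by (simp add: mult.commute)
        also have "ln (\<alpha> ^ Suc k) = real (Suc k) * ln \<alpha>" using alpha by (subst ln_realpow) auto
        finally show ?thesis unfolding s_def b_def by simp
      qed
      have xpos: "s + real (Suc k) * b > 0" using s1 b0 by (simp add: add_pos_nonneg)
      have "ln (y / 2) \<le> ln (real m)" using ym yt tN by (subst ln_le_cancel_iff) auto
      then have lnm: "s + real (Suc k) * b \<le> ln (real m)" using lny by simp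
      have "ln (real m) powr (-1-\<epsilon>) \<le> (s + real (Suc k) * b) powr (-1-\<epsilon>)"
        using lnm xpos eps by (intro powr_mono2') auto
      also have "(s + real (Suc k) * b) powr (-1-\<epsilon>) = (s + real (Suc k) * b) powr (-\<epsilon>/2) * (s + real (Suc k) * b) powr p"
        unfolding p_def by (subst powr_add[symmetric]) (simp add: algebra_simps)
      also have "\<dots> \<le> s powr (-\<epsilon>/2) * h k"
        unfolding h_def using s1 b0 eps xpos p
        by (intro mult_mono powr_mono2') (auto intro: add_pos_nonneg)
      finally have "ln (real m) powr (-1-\<epsilon>) \<le> s powr (-\<epsilon>/2) * h k" .
      then have "C * ln (real m) powr (-1-\<epsilon>) \<le> C * (s powr (-\<epsilon>/2) * h k)" using C by (intro mult_left_mono) auto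
      then show ?thesis using A e1 by (simp add: mult_ac)
    qed
    have sh2: "summable (\<lambda>k. C * s powr (-\<epsilon>/2) * h k)" by (intro summable_mult sh)
    note cs = conv_from_steps[of "\<lambda>k. g (xs t k)", OF stp sh2]
    have "(\<Sum>k. C * s powr (-\<epsilon>/2) * h k) = C * s powr (-\<epsilon>/2) * H" unfolding H_def by (rule suminf_mult[OF sh])
    then have "\<bar>lim (\<lambda>k. g (xs t k)) - g (xs t 0)\<bar> \<le> C * H * ln (t / 2) powr (-\<epsilon>/2)"
      using cs(2) unfolding s_def by (simp add: mult_ac)
    then show ?thesis using cs(1) by blast
  qed
  show ?thesis using main T0pos H0 C by (intro exI[of _ T0] exI[of _ C] exI[of _ H]) auto
qed

end


context LEA begin

definition psi :: "real \<Rightarrow> real" where "psi t = lim (\<lambda>k. g (xs t k))"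

lemma xs_shift: "xs (t / \<alpha> ^ K) k = xs t (k + K)"
  unfolding xs_def using alpha by (simp add: power_add field_simps)

lemma conv_all: assumes "t > 0" shows "convergent (\<lambda>k. g (xs t k))"
proof -
  obtain T0 C H where T0: "T0 > 0" and main: "\<And>t. t \<ge> T0 \<Longrightarrow> convergent (\<lambda>k. g (xs t k))"
    using scale_conv by blast
  have "1 < 1 / \<alpha>" using alpha by simp
  then obtain K where K: "T0 / t < (1 / \<alpha>) ^ K" using real_arch_pow by blast
  have "T0 < t * (1 / \<alpha>) ^ K" using K assms by (simp add: pos_divide_less_eq mult.commute)
  also have "\<dots> = t / \<alpha> ^ K" by (simp add: power_one_over)
  finally have "convergent (\<lambda>k. g (xs (t / \<alpha> ^ K) k))" by (intro main) simp
  then have "convergent (\<lambda>k. g (xs t (k + K)))" unfolding xs_shift .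
  then show ?thesis by (subst (asm) convergent_ignore_initial_segment[of "\<lambda>k. g (xs t k)"])
qed

lemma psi_lim: "t > 0 \<Longrightarrow> (\<lambda>k. g (xs t k)) \<longlonglongrightarrow> psi t"
  unfolding psi_def using conv_all by (simp add: convergent_LIMSEQ_iff)

lemma psi_inv: assumes "t > 0" shows "psi (\<alpha> * t) = psi t"
proof -
  have e: "xs (\<alpha> * t) (Suc k) = xs t k" for k unfolding xs_def using alpha by simp
  have "(\<lambda>k. g (xs (\<alpha> * t) (Suc k))) \<longlonglongrightarrow> psi t" unfolding e using psi_lim[OF assms] .
  then have "(\<lambda>k. g (xs (\<alpha> * t) k)) \<longlonglongrightarrow> psi t" by (rule LIMSEQ_imp_Suc)
  then show ?thesis unfolding psi_def by (rule limI)
qed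

lemma psi_lip: assumes s: "s > 0" and t: "t > 0"
  shows "\<bar>psi s - psi t\<bar> \<le> Bd * \<bar>s - t\<bar> / min s t"
proof -
  define m where "m = min s t"
  have m: "m > 0" using s t unfolding m_def by simp
  have "(\<lambda>k. \<alpha> ^ k) \<longlonglongrightarrow> 0" using alpha by (intro LIMSEQ_power_zero) simp
  then have ev: "eventually (\<lambda>k. \<alpha> ^ k < m / 2) sequentially" using m by (intro order_tendstoD) auto
  have L1: "(\<lambda>k. \<bar>g (xs s k) - g (xs t k)\<bar>) \<longlonglongrightarrow> \<bar>psi s - psi t\<bar>"
    by (intro tendsto_intros psi_lim s t)
  have L2: "(\<lambda>k. Bd * (\<bar>s - t\<bar> + \<alpha> ^ k) / (m - \<alpha> ^ k)) \<longlonglongrightarrow> Bd * (\<bar>s - t\<bar> + 0) / (m - 0)"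
    using m alpha by (intro tendsto_intros LIMSEQ_power_zero) auto
  have "\<bar>psi s - psi t\<bar> \<le> Bd * (\<bar>s - t\<bar> + 0) / (m - 0)"
  proof (rule tendsto_le[OF _ L2 L1])
    show "eventually (\<lambda>k. \<bar>g (xs s k) - g (xs t k)\<bar> \<le> Bd * (\<bar>s - t\<bar> + \<alpha> ^ k) / (m - \<alpha> ^ k)) sequentially"
      using ev
    proof eventually_elim
      case (elim k)
      define q where "q = \<alpha> ^ k"
      have q: "q > 0" unfolding q_def using alpha by simp
      have qm: "q < m / 2" using elim unfolding q_def .
      define u where "u = s / q"
      define v where "v = t / q"
      have mu: "u \<ge> m / q" "v \<ge> m / q" unfolding u_def v_def m_def using q by (auto intro: divide_right_mono)
      have mq2: "m / q > 2" using qm q m by (simp add: less_divide_eq mult.commute)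
      define a where "a = nat \<lfloor>u\<rfloor>"
      define c where "c = nat \<lfloor>v\<rfloor>"
      have ab: "real a \<le> u" "real a > u - 1" unfolding a_def using mu mq2 by linarith+
      have cb: "real c \<le> v" "real c > v - 1" unfolding c_def using mu mq2 by linarith+
      have a1: "a \<ge> 1" "c \<ge> 1" using ab cb mu mq2 by linarith+
      have xa: "xs s k = a" "xs t k = c" unfolding xs_def a_def c_def u_def v_def q_def by simp_all
      have diff: "\<bar>real a - real c\<bar> \<le> \<bar>s - t\<bar> / q + 1"
      proof -
        have "\<bar>u - v\<bar> = \<bar>s - t\<bar> / q" unfolding u_def v_def using q by (simp add: diff_divide_distrib[symmetric])
        then show ?thesis using ab cb by linarith
      qed
      have mn: "min (real a) (real c) \<ge> m / q - 1" using ab cb mu by linarith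
      have mn0: "m / q - 1 > 0" using mq2 by simp
      have mpos: "min (real a) (real c) > 0" using mn mn0 by linarith
      have "\<bar>g (xs s k) - g (xs t k)\<bar> \<le> Bd * \<bar>real a - real c\<bar> / min (real a) (real c)"
        unfolding xa by (rule g_lip2[OF a1(2) a1(1)])
      also have "\<dots> \<le> Bd * (\<bar>s - t\<bar> / q + 1) / min (real a) (real c)"
        using diff Bd(1) mn mn0 by (intro divide_right_mono mult_left_mono) auto
      also have "\<dots> \<le> Bd * (\<bar>s - t\<bar> / q + 1) / (m / q - 1)"
        using mn mn0 Bd(1) q mpos by (intro divide_left_mono mult_nonneg_nonneg add_nonneg_nonneg) (auto intro: mult_pos_pos)
      also have "\<dots> = Bd * (\<bar>s - t\<bar> + q) / (m - q)"
        using q qm m by (simp add: field_simps)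
      finally show ?case unfolding q_def .
    qed
  qed simp
  then show ?thesis unfolding m_def by simp
qed

lemma psi_lip': assumes "s > 0" "t > 0" "s \<ge> r" "t \<ge> r" "r > 0"
  shows "\<bar>psi s - psi t\<bar> \<le> Bd / r * \<bar>s - t\<bar>"
proof -
  have "\<bar>psi s - psi t\<bar> \<le> Bd * \<bar>s - t\<bar> / min s t" by (rule psi_lip) (use assms in auto)
  also have "\<dots> \<le> Bd * \<bar>s - t\<bar> / r" using assms Bd(1) by (intro divide_left_mono) auto
  finally show ?thesis by simp
qed

lemma psi_cont: "continuous_on {0<..} psi"
  unfolding continuous_on_iff
proof (intro ballI allI impI)
  fix x e :: real assume x: "x \<in> {0<..}" and e: "e > 0"
  then have x0: "x > 0" by simp
  define dd where "dd = min (x / 2) (e * x / (2 * Bd))"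
  have dd: "dd > 0" unfolding dd_def using x0 e Bd(1) by simp
  show "\<exists>d>0. \<forall>x'\<in>{0<..}. dist x' x < d \<longrightarrow> dist (psi x') (psi x) < e"
  proof (intro exI[of _ dd] conjI dd ballI impI)
    fix x' assume x': "x' \<in> {0<..}" and dx: "dist x' x < dd"
    have xx: "\<bar>x' - x\<bar> < dd" using dx by (simp add: dist_real_def)
    have x'2: "x' \<ge> x / 2" using xx unfolding dd_def by linarith
    have "\<bar>psi x' - psi x\<bar> \<le> Bd / (x / 2) * \<bar>x' - x\<bar>"
      by (rule psi_lip') (use x' x0 x'2 in auto)
    also have "\<dots> < Bd / (x / 2) * (e * x / (2 * Bd))"
    proof (rule mult_strict_left_mono)
      show "\<bar>x' - x\<bar> < e * x / (2 * Bd)" using xx unfolding dd_def by linarith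
    qed (use Bd(1) x0 in simp)
    also have "\<dots> = e" using Bd(1) x0 by (simp add: field_simps)
    finally show "dist (psi x') (psi x) < e" by (simp add: dist_real_def)
  qed
qed

lemma psi_loclip: "locally_lipschitz_on {0<..} psi"
  unfolding locally_lipschitz_on_def
proof (intro ballI)
  fix x :: real assume "x \<in> {0<..}"
  then have x0: "x > 0" by simp
  show "\<exists>e>0. \<exists>L. L-lipschitz_on (cball x e \<inter> {0<..}) psi"
  proof -
    have lip: "(Bd / (x / 2))-lipschitz_on (cball x (x / 2) \<inter> {0<..}) psi"
      unfolding lipschitz_on_def
    proof (intro conjI ballI)
      show "0 \<le> Bd / (x / 2)" using Bd(1) x0 by simp
      fix y z assume y: "y \<in> cball x (x / 2) \<inter> {0<..}" and z: "z \<in> cball x (x / 2) \<inter> {0<..}"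
      have "\<bar>x - y\<bar> \<le> x / 2" "y > 0" using y by (auto simp: dist_real_def)
      then have y2: "y \<ge> x / 2" "y > 0" by linarith+
      have "\<bar>x - z\<bar> \<le> x / 2" "z > 0" using z by (auto simp: dist_real_def)
      then have z2: "z \<ge> x / 2" "z > 0" by linarith+
      have "\<bar>psi y - psi z\<bar> \<le> Bd / (x / 2) * \<bar>y - z\<bar>"
        by (rule psi_lip') (use y2 z2 x0 in auto)
      then show "dist (psi y) (psi z) \<le> Bd / (x / 2) * dist y z" by (simp add: dist_real_def)
    qed
    have "x / 2 > 0" using x0 by simp
    then show ?thesis using lip by blast
  qed
qed

lemma g_psi: "(\<lambda>n. g n - psi (real n)) \<longlonglongrightarrow> 0"
proof -
  obtain T0 C H where T0: "T0 > 0" "C \<ge> 0" "H \<ge> 0" and main: "\<And>t. t \<ge> T0 \<Longrightarrow> convergent (\<lambda>k. g (xs t k)) \<and>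
    \<bar>lim (\<lambda>k. g (xs t k)) - g (xs t 0)\<bar> \<le> C * H * ln (t / 2) powr (-\<epsilon>/2)"
    using scale_conv by blast
  have ev: "eventually (\<lambda>n::nat. real n \<ge> T0) sequentially" by real_asymp
  have lim0: "(\<lambda>n::nat. ln (real n / 2) powr (-\<epsilon>/2)) \<longlonglongrightarrow> 0" using eps by real_asymp
  have lim1: "(\<lambda>n::nat. C * H * ln (real n / 2) powr (-\<epsilon>/2)) \<longlonglongrightarrow> 0"
    using tendsto_mult_right_zero[OF lim0, of "C * H"] by (simp add: mult_ac)
  show ?thesis
  proof (rule Lim_null_comparison[OF _ lim1])
    show "eventually (\<lambda>n. norm (g n - psi (real n)) \<le> C * H * ln (real n / 2) powr (-\<epsilon>/2)) sequentially"
      using ev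
    proof eventually_elim
      case (elim n)
      have x0: "xs (real n) 0 = n" unfolding xs_def by simp
      have "\<bar>psi (real n) - g n\<bar> \<le> C * H * ln (real n / 2) powr (-\<epsilon>/2)"
        using main[OF elim] unfolding psi_def x0 by simp
      then show ?case by (simp add: abs_minus_commute)
    qed
  qed
qed

end


context LEA begin
lemma LEA_main: "\<exists>\<psi> :: real \<Rightarrow> real. continuous_on {0<..} \<psi> \<and> locally_lipschitz_on {0<..} \<psi> \<and>
           (\<forall>t>0. \<psi> (\<alpha> * t) = \<psi> t) \<and> (\<lambda>n. g n - \<psi> (real n)) \<longlonglongrightarrow> 0"
  using psi_cont psi_loclip psi_inv g_psi by blast
end

theorem theorem2p3:
  fixes Y :: "nat \<Rightarrow> nat pmf" and \<alpha> :: real and a :: nat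
  assumes "condition1 Y \<alpha>" and "a \<ge> 1"
  shows "\<forall>i\<ge>1. \<exists>\<psi> :: real \<Rightarrow> real.
           continuous_on {0<..} \<psi> \<and> locally_lipschitz_on {0<..} \<psi> \<and>
           (\<forall>t>0. \<psi> (\<alpha> * t) = \<psi> t) \<and>
           (\<lambda>n. visit_prob Y a i n - \<psi> (real n)) \<longlonglongrightarrow> 0"
proof (intro allI impI)
  fix i :: nat assume i1: "i \<ge> 1"
  note c = assms(1)[unfolded condition1_def]
  have supp: "\<And>n. n \<ge> 1 \<Longrightarrow> set_pmf (Y n) \<subseteq> {1..n}" using c by blast
  have dom: "\<And>n k. n \<ge> 1 \<Longrightarrow> k \<ge> 1 \<Longrightarrow> measure_pmf.prob (Y (Suc n)) {..k} \<le> measure_pmf.prob (Y n) {..k}"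
    using c by blast
  have alpha: "0 < \<alpha>" "\<alpha> < 1" using c by blast+
  obtain \<epsilon> \<delta> where eps: "\<epsilon> > 0"
    and O1: "\<delta> \<in> O(\<lambda>n. (ln (real n)) powr (-1 - \<epsilon>))"
    and O2: "(\<lambda>n. measure_pmf.expectation (Y (Suc n)) real - measure_pmf.expectation (Y n) real - \<alpha>) \<in> O(\<delta>)"
    and O3: "(\<lambda>n. measure_pmf.prob (Y n) {k. \<bar>real k - \<alpha> * real n\<bar> > \<delta> n * real n}) \<in> O(\<lambda>n. real n powr (-2 - \<epsilon>))"
    using c by blast
  obtain c1 where c1: "c1 > 0" and e1: "eventually (\<lambda>n. norm (\<delta> n) \<le> c1 * norm ((ln (real n)) powr (-1 - \<epsilon>))) at_top"
    using O1 by (elim landau_o.bigE)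
  obtain c2 where c2: "c2 > 0" and e2: "eventually (\<lambda>n. norm (measure_pmf.expectation (Y (Suc n)) real - measure_pmf.expectation (Y n) real - \<alpha>) \<le> c2 * norm (\<delta> n)) at_top"
    using O2 by (elim landau_o.bigE)
  obtain c3 where c3: "c3 > 0" and e3: "eventually (\<lambda>n. norm (measure_pmf.prob (Y n) {k. \<bar>real k - \<alpha> * real n\<bar> > \<delta> n * real n}) \<le> c3 * norm (real n powr (-2 - \<epsilon>))) at_top"
    using O3 by (elim landau_o.bigE)
  obtain N0 where N0: "\<And>n. n \<ge> N0 \<Longrightarrow> norm (\<delta> n) \<le> c1 * norm ((ln (real n)) powr (-1 - \<epsilon>)) \<and>
      norm (measure_pmf.expectation (Y (Suc n)) real - measure_pmf.expectation (Y n) real - \<alpha>) \<le> c2 * norm (\<delta> n) \<and>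
      norm (measure_pmf.prob (Y n) {k. \<bar>real k - \<alpha> * real n\<bar> > \<delta> n * real n}) \<le> c3 * norm (real n powr (-2 - \<epsilon>))"
    using eventually_conj[OF e1 eventually_conj[OF e2 e3]] unfolding eventually_at_top_linorder by blast
  define D where "D n = \<bar>\<delta> n\<bar>" for n
  define g where "g = visit_prob Y a i"
  define M where "M = max a i + 1"
  have fin: "\<And>n. n > a \<Longrightarrow> finite (set_pmf (Y n))"
    using supp assms(2) by (meson finite_atLeastAtMost finite_subset le_trans less_imp_le_nat)
  interpret LEA Y \<alpha> \<epsilon> D c2 c1 c3 N0 g M
  proof
    show "\<And>n. n \<ge> 1 \<Longrightarrow> set_pmf (Y n) \<subseteq> {1..n}" by (rule supp)
    show "\<And>n k. n \<ge> 1 \<Longrightarrow> k \<ge> 1 \<Longrightarrow> measure_pmf.prob (Y (Suc n)) {..k} \<le> measure_pmf.prob (Y n) {..k}" by (rule dom)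
    show "0 < \<alpha>" "\<alpha> < 1" "\<epsilon> > 0" by (rule alpha(1), rule alpha(2), rule eps)
    show "\<And>n. D n \<ge> 0" unfolding D_def by simp
    show "c2 \<ge> 0" "c1 > 0" "c3 \<ge> 0" using c1 c2 c3 by auto
    fix n :: nat
    show "n \<ge> N0 \<Longrightarrow> measure_pmf.expectation (Y (Suc n)) real - measure_pmf.expectation (Y n) real \<le> \<alpha> + c2 * D n"
      using N0[of n] unfolding D_def by (auto simp: abs_le_iff)
    show "n \<ge> N0 \<Longrightarrow> D n \<le> c1 * ln (real n) powr (-1-\<epsilon>)"
      using N0[of n] unfolding D_def by simp
    show "n \<ge> N0 \<Longrightarrow> measure_pmf.prob (Y n) {k. \<bar>real k - \<alpha> * real n\<bar> > D n * real n} \<le> c3 * real n powr (-2-\<epsilon>)"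
    proof -
      assume nN: "n \<ge> N0"
      have "measure_pmf.prob (Y n) {k. \<bar>real k - \<alpha> * real n\<bar> > D n * real n}
          \<le> measure_pmf.prob (Y n) {k. \<bar>real k - \<alpha> * real n\<bar> > \<delta> n * real n}"
      proof (rule measure_pmf.finite_measure_mono)
        have "\<delta> n * real n \<le> D n * real n" unfolding D_def by (intro mult_right_mono) auto
        then show "{k. \<bar>real k - \<alpha> * real n\<bar> > D n * real n} \<subseteq> {k. \<bar>real k - \<alpha> * real n\<bar> > \<delta> n * real n}"
          by auto
      qed simp
      also have "\<dots> \<le> c3 * real n powr (-2-\<epsilon>)" using N0[OF nN] by simp
      finally show ?thesis .
    qed
    show "\<bar>g n\<bar> \<le> 1" unfolding g_def using visit_prob_bounds[OF fin, where i=i and n=n] by simp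
    show "n \<ge> M \<Longrightarrow> g n = (\<Sum>j\<le>n. pmf (Y n) j * g j)"
    proof -
      assume nM: "n \<ge> M"
      then have na: "n > a" "n \<noteq> i" "n \<ge> 1" unfolding M_def using assms(2) by auto
      have "g n = (\<Sum>j\<in>set_pmf (Y n). pmf (Y n) j * g j)"
        unfolding g_def by (rule visit_prob_rec[OF fin na(2) na(1)])
      also have "\<dots> = (\<Sum>j\<le>n. pmf (Y n) j * g j)"
        using supp[OF na(3)] by (intro sum.mono_neutral_left) (auto simp: set_pmf_eq)
      finally show ?thesis .
    qed
  qed
  show "\<exists>\<psi> :: real \<Rightarrow> real. continuous_on {0<..} \<psi> \<and> locally_lipschitz_on {0<..} \<psi> \<and>
           (\<forall>t>0. \<psi> (\<alpha> * t) = \<psi> t) \<and> (\<lambda>n. visit_prob Y a i n - \<psi> (real n)) \<longlonglongrightarrow> 0"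
    using LEA_main unfolding g_def .
qed


end
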